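(* Suppose $g$ satisfies the Hölderian error bound $\frac{\alpha}{r}\,\mathrm{dist}(\mathbf{x},\mathcal{X}_g^* )^r\leq g(\mathbf{x}) - g^*$ for all $\mathbf{x}\in\mathcal{Z}$ with $\alpha>0$ and $r \geq 1$. Let $M= \max_{\mathbf{x}\in \mathcal{X}_g^*} \|\nabla f(\mathbf{x})\|_*$. (i) If $f$ is convex and we set $\epsilon_g = \frac{\alpha}{r}\left(\frac{\epsilon_f}{M}\right)^r$, then running CG-BiO with stepsize $\gamma_k=2/(k+2)$, after $K=\mathcal{O}(1/\epsilon_f^r)$ iterations we have $|f(\mathbf{x}_K)-f^*| \leq \epsilon_f$ and $g(\mathbf{x}_K) - g^* \leq \epsilon_g$. (ii) If $f$ is non-convex and we set $\epsilon_g = \min\{\frac{\alpha}{r}\left(\frac{\epsilon_f}{2M}\right)^r, \frac{\alpha}{r}\bigl(\frac{ \epsilon_f}{2L_f}\bigr)^{r/2}\}$, then running CG-BiO with constant stepsize $\gamma_k=\min\{\frac{\epsilon_f}{L_fD^2},\frac{\epsilon_g}{L_gD^2}\}$, after $K=\mathcal{O}(1/\epsilon_f^{r+1})$ iterations there exists $k^*\in\{0,\dots,K-1\}$ such that $|\mathcal{G} (\mathbf{x}_{k^*})| \leq \epsilon_f$ and $g(\mathbf{x}_{k^*})-g^*\leq \epsilon_g$.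
   Context: Consider the simple bilevel problem $\min_{\mathbf{x}\in\mathbb{R}^d} f(\mathbf{x})$ s.t. $\mathbf{x}\in \operatorname*{arg\,min}_{\mathbf{z}\in\mathcal{Z}} g(\mathbf{z})$. Assume: $\mathcal{Z}\subset\mathbb{R}^d$ is convex and compact with diameter $D$ in a norm $\|\cdot\|$ (dual norm $\|\cdot\|_*$); $g$ is convex and continuously differentiable on an open set containing $\mathcal{Z}$ with $L_g$-Lipschitz gradient; $f$ is continuously differentiable with $L_f$-Lipschitz gradient. Let $g^*=\min_{\mathbf{z}\in\mathcal{Z}}g(\mathbf{z})$, $\mathcal{X}_g^*=\operatorname*{arg\,min}_{\mathbf{z}\in\mathcal{Z}}g(\mathbf{z})$, $f^*$ the optimal value of the bilevel problem, $\mathrm{dist}(\mathbf{x},\mathcal{X}_g^* )=\inf_{\mathbf{x}'\in\mathcal{X}_g^*}\|\mathbf{x}-\mathbf{x}'\|$, and $\mathcal{G}(\mathbf{x})=\max_{\mathbf{s}\in\mathcal{X}_g^*}\langle\nabla f(\mathbf{x}),\mathbf{x}-\mathbf{s}\rangle$ the Frank–Wolfe gap. The CG-BiO algorithm: choose $\mathbf{x}_0\in\mathcal{Z}$ with $g(\mathbf{x}_0)-g^*\le \epsilon_g/2$; at iteration $k$, let $\mathcal{X}_k=\{\mathbf{s}\in\mathcal{Z}: \langle\nabla g(\mathbf{x}_k),\mathbf{s}-\mathbf{x}_k\rangle\le g(\mathbf{x}_0)-g(\mathbf{x}_k)\}$, compute $\mathbf{s}_k\in\operatorname*{arg\,min}_{\mathbf{s}\in\mathcal{X}_k}\langle\nabla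 f(\mathbf{x}_k),\mathbf{s}\rangle$ and set $\mathbf{x}_{k+1}=(1-\gamma_k)\mathbf{x}_k+\gamma_k\mathbf{s}_k$. *)

theory Defs
  imports "HOL-Analysis.Analysis"
begin

definition is_norm :: "('a::real_vector \<Rightarrow> real) \<Rightarrow> bool" where
  "is_norm N \<longleftrightarrow> (\<forall>x. 0 \<le> N x) \<and> (\<forall>x. N x = 0 \<longleftrightarrow> x = 0)
     \<and> (\<forall>c x. N (c *\<^sub>R x) = \<bar>c\<bar> * N x) \<and> (\<forall>x y. N (x + y) \<le> N x + N y)"

definition dual_norm :: "('a::real_inner \<Rightarrow> real) \<Rightarrow> 'a \<Rightarrow> real" where
  "dual_norm N y = (SUP x\<in>{x. N x \<le> 1}. y \<bullet> x)"

definition ndist :: "('a::real_vector \<Rightarrow> real) \<Rightarrow> 'a \<Rightarrow> 'a set \<Rightarrow> real" where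
  "ndist N x A = (INF y\<in>A. N (x - y))"

definition ndiam :: "('a::real_vector \<Rightarrow> real) \<Rightarrow> 'a set \<Rightarrow> real" where
  "ndiam N A = (SUP p\<in>A \<times> A. N (fst p - snd p))"

definition lower_min :: "'a set \<Rightarrow> ('a \<Rightarrow> real) \<Rightarrow> real" where
  "lower_min Z g = (INF z\<in>Z. g z)"

definition lower_argmin :: "'a set \<Rightarrow> ('a \<Rightarrow> real) \<Rightarrow> 'a set" where
  "lower_argmin Z g = {z\<in>Z. g z = lower_min Z g}"

definition bilevel_opt :: "'a set \<Rightarrow> ('a \<Rightarrow> real) \<Rightarrow> ('a \<Rightarrow> real) \<Rightarrow> real" where
  "bilevel_opt Z f g = (INF x\<in>lower_argmin Z g. f x)"

definition fw_gap :: "'a::real_inner set \<Rightarrow> ('a \<Rightarrow> real) \<Rightarrow> ('a \<Rightarrow> 'a) \<Rightarrow> 'a \<Rightarrow> real" where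
  "fw_gap Z g gf x = (SUP s\<in>lower_argmin Z g. gf x \<bullet> (x - s))"

definition cut_set :: "'a::real_inner set \<Rightarrow> ('a \<Rightarrow> real) \<Rightarrow> ('a \<Rightarrow> 'a) \<Rightarrow> 'a \<Rightarrow> 'a \<Rightarrow> 'a set" where
  "cut_set Z g gg x0 xk = {t\<in>Z. gg xk \<bullet> (t - xk) \<le> g x0 - g xk}"

text \<open>(x, s) is a run of CG-BiO with accuracy eps_g and stepsizes gamma
  (gf, gg are the gradients of f, g).\<close>
definition cgbio_run :: "'a::real_inner set \<Rightarrow> ('a \<Rightarrow> real) \<Rightarrow> ('a \<Rightarrow> 'a) \<Rightarrow> ('a \<Rightarrow> 'a)
    \<Rightarrow> real \<Rightarrow> (nat \<Rightarrow> real) \<Rightarrow> (nat \<Rightarrow> 'a) \<Rightarrow> (nat \<Rightarrow> 'a) \<Rightarrow> bool" where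
  "cgbio_run Z g gg gf eps_g \<gamma> x s \<longleftrightarrow>
     x 0 \<in> Z \<and> g (x 0) - lower_min Z g \<le> eps_g / 2 \<and>
     (\<forall>k. s k \<in> cut_set Z g gg (x 0) (x k) \<and>
          (\<forall>t\<in>cut_set Z g gg (x 0) (x k). gf (x k) \<bullet> s k \<le> gf (x k) \<bullet> t)) \<and>
     (\<forall>k. x (Suc k) = (1 - \<gamma> k) *\<^sub>R x k + \<gamma> k *\<^sub>R s k)"

end

theory Submission
  imports Defs
begin


lemma isn:
  assumes "is_norm N"
  shows "N 0 = 0" "N (-x) = N x" "N (x - y) = N (y - x)" "0 \<le> N x" "N (x+y) \<le> N x + N y"
    "N (c *\<^sub>R x) = \<bar>c\<bar> * N x" "N x = 0 \<longleftrightarrow> x = 0"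
proof -
  show "N (-x) = N x" using assms unfolding is_norm_def by (metis abs_minus_cancel abs_one mult_1 scaleR_minus1_left)
  have "N (-(y - x)) = N (y - x)" using assms unfolding is_norm_def by (metis abs_minus_cancel abs_one mult_1 scaleR_minus1_left)
  then show "N (x - y) = N (y - x)" by simp
  show "N 0 = 0" using assms unfolding is_norm_def by blast
  show "0 \<le> N x" "N (x+y) \<le> N x + N y" "N (c *\<^sub>R x) = \<bar>c\<bar> * N x" "N x = 0 \<longleftrightarrow> x = 0"
    using assms unfolding is_norm_def by (simp_all only:)
qed

lemma norm_sum_le:
  assumes "is_norm N" "finite A"
  shows "N (sum h A) \<le> (\<Sum>a\<in>A. N (h a))"
  using assms(2)
proof induct
  case empty then show ?case using isn(1)[OF assms(1)] by simp
next
  case (insert a F)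
  then show ?case using isn(5)[OF assms(1), of "h a" "sum h F"] by simp
qed

lemma norm_upper:
  fixes N :: "'a::euclidean_space \<Rightarrow> real"
  assumes "is_norm N"
  shows "N x \<le> (\<Sum>b\<in>Basis. N b) * norm x"
proof -
  have "N x = N (\<Sum>b\<in>Basis. (x\<bullet>b) *\<^sub>R b)" by (simp add: euclidean_representation)
  also have "\<dots> \<le> (\<Sum>b\<in>Basis. N ((x\<bullet>b) *\<^sub>R b))" by (rule norm_sum_le[OF assms]) simp
  also have "\<dots> = (\<Sum>b\<in>Basis. \<bar>x\<bullet>b\<bar> * N b)" using isn(6)[OF assms] by simp
  also have "\<dots> \<le> (\<Sum>b\<in>Basis. norm x * N b)"
    by (intro sum_mono mult_right_mono) (auto simp: Basis_le_norm isn(4)[OF assms])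
  also have "\<dots> = (\<Sum>b\<in>Basis. N b) * norm x" by (simp add: sum_distrib_left mult.commute)
  finally show ?thesis .
qed

lemma norm_cont:
  fixes N :: "'a::euclidean_space \<Rightarrow> real"
  assumes "is_norm N"
  shows "continuous_on S N"
proof -
  define K where "K = (\<Sum>b\<in>Basis. N b)"
  have K: "K \<ge> 0" unfolding K_def by (intro sum_nonneg) (simp add: isn(4)[OF assms])
  have "\<bar>N x - N y\<bar> \<le> K * norm (x - y)" for x y
  proof -
    have "N x \<le> N y + N (x - y)" using isn(5)[OF assms, of y "x - y"] by simp
    moreover have "N y \<le> N x + N (x - y)" using isn(5)[OF assms, of x "y - x"] isn(3)[OF assms, of x y] by simp
    ultimately have "\<bar>N x - N y\<bar> \<le> N (x - y)" by linarith
    also have "\<dots> \<le> K * norm (x - y)" unfolding K_def by (rule norm_upper[OF assms])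
    finally show ?thesis .
  qed
  then have "K-lipschitz_on S N"
    by (intro lipschitz_onI K) (simp add: dist_real_def dist_norm)
  then show ?thesis by (rule lipschitz_on_continuous_on)
qed

lemma norm_lower:
  fixes N :: "'a::euclidean_space \<Rightarrow> real"
  assumes "is_norm N"
  shows "\<exists>c>0. \<forall>x. c * norm x \<le> N x"
proof -
  have "sphere (0::'a) 1 \<noteq> {}" by simp
  then obtain u where u: "u \<in> sphere 0 1" "\<forall>y\<in>sphere 0 1. N u \<le> N y"
    using continuous_attains_inf[of "sphere (0::'a) 1" N] norm_cont[OF assms] by auto
  have "u \<noteq> 0" using u by auto
  then have up: "N u > 0" using isn(4,7)[OF assms] by (metis less_eq_real_def)
  have "N u * norm x \<le> N x" for x
  proof (cases "x = 0")
    case True then show ?thesis using isn(1)[OF assms] by simp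
  next
    case False
    then have "N u \<le> N (inverse (norm x) *\<^sub>R x)" using u by auto
    also have "\<dots> = N x / norm x" using isn(6)[OF assms] by (simp add: divide_inverse_commute)
    finally show ?thesis using False by (simp add: field_simps)
  qed
  then show ?thesis using up by blast
qed

lemma dual_bdd:
  fixes N :: "'a::euclidean_space \<Rightarrow> real"
  assumes "is_norm N"
  shows "bdd_above ((\<lambda>x. y \<bullet> x) ` {x. N x \<le> 1})"
proof -
  obtain c where c: "c > 0" "\<forall>x. c * norm x \<le> N x" using norm_lower[OF assms] by blast
  have "y \<bullet> x \<le> norm y / c" if "N x \<le> 1" for x
  proof -
    have "norm x \<le> 1 / c" using c that by (metis dual_order.trans mult.commute pos_le_divide_eq)
    then have "norm y * norm x \<le> norm y / c" using mult_left_mono[of "norm x" "1/c" "norm y"] by simp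
    then show ?thesis using norm_cauchy_schwarz[of y x] by linarith
  qed
  then show ?thesis by (intro bdd_aboveI2) auto
qed

lemma dual_ineq:
  fixes N :: "'a::euclidean_space \<Rightarrow> real"
  assumes "is_norm N"
  shows "y \<bullet> h \<le> dual_norm N y * N h"
proof (cases "h = 0")
  case True then show ?thesis using isn(1)[OF assms] by simp
next
  case False
  then have hp: "N h > 0" using isn(4,7)[OF assms] by (metis less_eq_real_def)
  have "N (inverse (N h) *\<^sub>R h) = 1" using isn(6)[OF assms] hp by simp
  then have "y \<bullet> (inverse (N h) *\<^sub>R h) \<le> dual_norm N y" unfolding dual_norm_def
    by (intro cSUP_upper dual_bdd[OF assms]) auto
  then show ?thesis using hp by (simp add: field_simps)
qed

lemma dual_le:
  fixes N :: "'a::euclidean_space \<Rightarrow> real"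
  assumes "is_norm N"
  shows "\<exists>c>0. \<forall>y. dual_norm N y \<le> norm y / c"
proof -
  obtain c where c: "c > 0" "\<forall>x. c * norm x \<le> N x" using norm_lower[OF assms] by blast
  have "dual_norm N y \<le> norm y / c" for y
    unfolding dual_norm_def
  proof (rule cSUP_least)
    show "{x. N x \<le> 1} \<noteq> {}" using isn(1)[OF assms] by (metis empty_iff mem_Collect_eq zero_less_one less_eq_real_def)
    fix x assume "x \<in> {x. N x \<le> 1}"
    then have "norm x \<le> 1 / c" using c by (metis mem_Collect_eq dual_order.trans mult.commute pos_le_divide_eq)
    then have "norm y * norm x \<le> norm y / c" using mult_left_mono[of "norm x" "1/c" "norm y"] by simp
    then show "y \<bullet> x \<le> norm y / c" using norm_cauchy_schwarz[of y x] by linarith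
  qed
  then show ?thesis using c by blast
qed

lemma dual_nonneg:
  fixes N :: "'a::euclidean_space \<Rightarrow> real"
  assumes "is_norm N"
  shows "0 \<le> dual_norm N y"
proof -
  have "y \<bullet> 0 \<le> dual_norm N y" unfolding dual_norm_def
    by (intro cSUP_upper dual_bdd[OF assms]) (auto simp: isn(1)[OF assms])
  then show ?thesis by simp
qed

lemma dual_ineq':
  fixes N :: "'a::euclidean_space \<Rightarrow> real"
  assumes "is_norm N"
  shows "- (dual_norm N y * N h) \<le> y \<bullet> h"
  using dual_ineq[OF assms, of y "-h"] isn(2)[OF assms, of h] by simp

lemma line_deriv:
  assumes "(g has_derivative (\<lambda>v. G \<bullet> v)) (at (x + t *\<^sub>R h))"
  shows "((\<lambda>t. g (x + t *\<^sub>R h)) has_real_derivative (G \<bullet> h)) (at t)"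
proof -
  have l: "((\<lambda>t. x + t *\<^sub>R h) has_derivative (\<lambda>s. s *\<^sub>R h)) (at t)"
    by (auto intro!: derivative_eq_intros)
  have "((g \<circ> (\<lambda>t. x + t *\<^sub>R h)) has_derivative ((\<lambda>v. G \<bullet> v) \<circ> (\<lambda>s. s *\<^sub>R h))) (at t)"
    by (rule diff_chain_at[OF l]) (use assms in simp)
  then show ?thesis
    by (simp add: has_field_derivative_def comp_def mult.commute[of "G \<bullet> h"]) (metis (no_types, lifting) ext mult.commute)
qed

lemma descent:
  fixes N :: "'a::euclidean_space \<Rightarrow> real"
  assumes N: "is_norm N" and S: "convex S" "S \<subseteq> U"
    and der: "\<forall>x\<in>U. (g has_derivative (\<lambda>h. gg x \<bullet> h)) (at x)"
    and lip: "\<forall>x\<in>U. \<forall>y\<in>U. dual_norm N (gg x - gg y) \<le> L * N (x - y)"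
    and x: "x \<in> S" and y: "y \<in> S"
  shows "g y \<le> g x + gg x \<bullet> (y - x) + L/2 * (N (y - x))^2"
proof -
  define h where "h = y - x"
  define \<phi> where "\<phi> t = g (x + t *\<^sub>R h) - t * (gg x \<bullet> h) - L/2 * t^2 * (N h)^2" for t
  have "\<phi> 1 \<le> \<phi> 0"
  proof (rule DERIV_nonpos_imp_nonincreasing[of 0 1 \<phi>])
    show "(0::real) \<le> 1" by simp
  next
    fix t :: real assume t: "0 \<le> t" "t \<le> 1"
    have "x + t *\<^sub>R h = (1 - t) *\<^sub>R x + t *\<^sub>R y" by (simp add: h_def algebra_simps)
    also have "\<dots> \<in> S" using S(1) x y t by (simp add: convex_alt)
    finally have p: "x + t *\<^sub>R h \<in> U" using S(2) by blast
    have x': "x \<in> U" using x S(2) by blast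
    have d1: "((\<lambda>t. g (x + t *\<^sub>R h)) has_real_derivative (gg (x + t *\<^sub>R h) \<bullet> h)) (at t)"
      by (rule line_deriv) (use der p in blast)
    have d: "DERIV \<phi> t :> gg (x + t *\<^sub>R h) \<bullet> h - gg x \<bullet> h - L/2 * (2 * t) * (N h)^2"
      unfolding \<phi>_def
      by (rule derivative_eq_intros d1 | simp)+
    have "(gg (x + t *\<^sub>R h) - gg x) \<bullet> h \<le> dual_norm N (gg (x + t *\<^sub>R h) - gg x) * N h"
      by (rule dual_ineq[OF N])
    also have "\<dots> \<le> L * N (x + t *\<^sub>R h - x) * N h"
      using lip p x' isn(4)[OF N, of h] by (intro mult_right_mono) (metis add_diff_cancel_left')
    also have "\<dots> = L * t * (N h)^2" using isn(6)[OF N, of t h] t by (simp add: power2_eq_square)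
    finally have A: "(gg (x + t *\<^sub>R h) - gg x) \<bullet> h \<le> L * t * (N h)^2" .
    have "gg (x + t *\<^sub>R h) \<bullet> h - gg x \<bullet> h - L/2 * (2 * t) * (N h)^2 \<le> 0"
      using A by (simp add: inner_diff_left)
    then show "\<exists>y. DERIV \<phi> t :> y \<and> y \<le> 0" using d by blast
  qed
  then show ?thesis by (simp add: \<phi>_def h_def)
qed

lemma grad_ineq:
  assumes cv: "convex_on UNIV g" and der: "(g has_derivative (\<lambda>h. G \<bullet> h)) (at x)"
  shows "g x + G \<bullet> (y - x) \<le> g y"
proof -
  define h where "h = y - x"
  define \<psi> where "\<psi> t = g (x + t *\<^sub>R h)" for t
  have "convex_on UNIV \<psi>"
  proof (rule convex_onI)
    fix t a b :: real assume "0 < t" "t < 1"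
    have "x + ((1 - t) * a + t * b) *\<^sub>R h = (1 - t) *\<^sub>R (x + a *\<^sub>R h) + t *\<^sub>R (x + b *\<^sub>R h)"
      by (simp add: algebra_simps)
    then show "\<psi> ((1 - t) *\<^sub>R a + t *\<^sub>R b) \<le> (1 - t) * \<psi> a + t * \<psi> b"
      unfolding \<psi>_def using convex_onD[OF cv, of t "x + a *\<^sub>R h" "x + b *\<^sub>R h"] \<open>0 < t\<close> \<open>t < 1\<close>
      by simp
  qed simp
  moreover have "(\<psi> has_real_derivative (G \<bullet> h)) (at 0)"
    unfolding \<psi>_def by (rule line_deriv) (use der in simp)
  ultimately have "\<psi> 1 - \<psi> 0 \<ge> (G \<bullet> h) * (1 - 0)"
    by (intro convex_on_imp_above_tangent[where A=UNIV]) auto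
  then show ?thesis by (simp add: \<psi>_def h_def)
qed



lemma fw_rec:
  fixes a :: "nat \<Rightarrow> real"
  assumes B: "B \<ge> 0"
    and rec: "\<And>k. a (Suc k) \<le> (1 - 2/(real k + 2)) * a k + B * (2/(real k + 2))^2 / 2"
  shows "a (Suc k) \<le> 2 * B / (real (Suc k) + 2)"
proof (induction k)
  case 0
  have "a (Suc 0) \<le> B / 2" using rec[of 0] by (simp add: power2_eq_square)
  also have "\<dots> \<le> 2 * B / (real (Suc 0) + 2)" using B by simp
  finally show ?case .
next
  case (Suc k)
  define n where "n = real k"
  have n: "n \<ge> 0" by (simp add: n_def)
  have IH: "a (Suc k) \<le> 2 * B / (n + 3)" using Suc by (simp add: n_def add.commute)
  have c: "1 - 2/(real (Suc k) + 2) = (n + 1) / (n + 3)" using n by (simp add: n_def field_simps)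
  have "a (Suc (Suc k)) \<le> (n + 1) / (n + 3) * a (Suc k) + B * (2/(n + 3))^2 / 2"
    using rec[of "Suc k"] c by (simp add: n_def add.commute)
  also have "\<dots> \<le> (n + 1) / (n + 3) * (2 * B / (n + 3)) + B * (2/(n + 3))^2 / 2"
    using IH n by (intro add_right_mono mult_left_mono) auto
  also have "\<dots> = 2 * B * (n + 2) / (n + 3)^2"
  proof -
    have p: "n + 3 > 0" using n by simp
    show ?thesis using p by (simp add: divide_simps power2_eq_square) (simp add: algebra_simps)
  qed
  also have "\<dots> \<le> 2 * B / (n + 4)"
  proof -
    have "(n + 2) * (n + 4) \<le> (n + 3)^2" by (simp add: power2_eq_square algebra_simps)
    then have "(n + 2) / (n + 3)^2 \<le> 1 / (n + 4)" using n by (simp add: field_simps)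
    then show ?thesis using B mult_left_mono[of "(n + 2) / (n + 3)^2" "1 / (n + 4)" "2 * B"]
      by (simp add: field_simps)
  qed
  also have "\<dots> = 2 * B / (real (Suc (Suc k)) + 2)" by (simp add: n_def add.commute)
  finally show ?case .
qed

lemma const_rec:
  fixes e :: "nat \<Rightarrow> real"
  assumes "0 \<le> \<gamma>" "\<gamma> \<le> 1" "e 0 \<le> E" "\<And>k. e (Suc k) \<le> (1 - \<gamma>) * e k + \<gamma> * E"
  shows "e k \<le> E"
proof (induction k)
  case 0 then show ?case using assms by simp
next
  case (Suc k)
  have "(1 - \<gamma>) * e k \<le> (1 - \<gamma>) * E" using Suc assms by (intro mult_left_mono) auto
  then show ?case using assms(4)[of k] by (simp add: algebra_simps)
qed



locale bil =
  fixes N :: "'a::euclidean_space \<Rightarrow> real"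
    and Z U :: "'a set"
    and f g :: "'a \<Rightarrow> real"
    and gf gg :: "'a \<Rightarrow> 'a"
    and Lf Lg \<alpha> r :: real
  assumes norm: "is_norm N"
    and Z_convex: "convex Z" and Z_compact: "compact Z"
    and U_open: "open U" and Z_sub_U: "Z \<subseteq> U"
    and g_convex: "convex_on UNIV g"
    and g_grad: "\<forall>x\<in>U. (g has_derivative (\<lambda>h. gg x \<bullet> h)) (at x)"
    and g_Lip: "\<forall>x\<in>U. \<forall>y\<in>U. dual_norm N (gg x - gg y) \<le> Lg * N (x - y)"
    and f_grad: "\<forall>x. (f has_derivative (\<lambda>h. gf x \<bullet> h)) (at x)"
    and f_C1: "continuous_on UNIV gf"
    and f_Lip: "\<forall>x y. dual_norm N (gf x - gf y) \<le> Lf * N (x - y)"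
    and Lf_pos: "Lf > 0" and Lg_pos: "Lg > 0"
    and alpha_pos: "\<alpha> > 0" and r_ge1: "r \<ge> 1"
    and holder_EB: "\<forall>x\<in>Z. \<alpha> / r * ndist N x (lower_argmin Z g) powr r \<le> g x - lower_min Z g"
    and Zne: "Z \<noteq> {}"
begin

definition "gs = lower_min Z g"
definition "Xs = lower_argmin Z g"
definition "fs = bilevel_opt Z f g"
definition "M = (SUP x\<in>Xs. dual_norm N (gf x))"
definition "D = ndiam N Z"

lemma g_cont: "continuous_on Z g"
  using g_grad Z_sub_U has_derivative_continuous
  by (intro continuous_at_imp_continuous_on) blast

lemma f_cont: "continuous_on S f"
  using f_grad has_derivative_continuous
  by (intro continuous_at_imp_continuous_on) blast

lemma Z_closed: "closed Z" using Z_compact by (simp add: compact_imp_closed)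

lemma gs_prop: "\<exists>z\<in>Z. g z = gs" "z \<in> Z \<Longrightarrow> gs \<le> g z"
proof -
  obtain z where z: "z \<in> Z" "\<forall>y\<in>Z. g z \<le> g y"
    using continuous_attains_inf[OF Z_compact Zne g_cont] by blast
  have "gs = g z" unfolding gs_def lower_min_def
    by (rule cInf_eq_minimum) (use z in auto)
  then show "\<exists>z\<in>Z. g z = gs" using z by auto
  show "z \<in> Z \<Longrightarrow> gs \<le> g z" if "z \<in> Z" for z using \<open>gs = _\<close> z that by auto
qed

lemma Xs_eq: "Xs = {z\<in>Z. g z = gs}" unfolding Xs_def gs_def lower_argmin_def by simp

lemma Xs_sub: "Xs \<subseteq> Z" by (auto simp: Xs_eq)
lemma Xs_ne: "Xs \<noteq> {}" using gs_prop(1) by (auto simp: Xs_eq)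
lemma Xs_compact: "compact Xs"
proof -
  have "closed {z\<in>Z. g z = gs}"
    by (rule continuous_closed_preimage_constant[OF g_cont Z_closed])
  then have "compact (Z \<inter> {z\<in>Z. g z = gs})" using Z_compact by blast
  then show ?thesis by (simp add: Xs_eq Int_absorb1)
qed

lemma fs_prop: "\<exists>p\<in>Xs. f p = fs" "p \<in> Xs \<Longrightarrow> fs \<le> f p"
proof -
  obtain z where z: "z \<in> Xs" "\<forall>y\<in>Xs. f z \<le> f y"
    using continuous_attains_inf[OF Xs_compact Xs_ne f_cont] by blast
  have "fs = f z" unfolding fs_def bilevel_opt_def Xs_def[symmetric]
    by (rule cInf_eq_minimum) (use z in auto)
  then show "\<exists>p\<in>Xs. f p = fs" using z by auto
  show "p \<in> Xs \<Longrightarrow> fs \<le> f p" if "p \<in> Xs" for p using \<open>fs = _\<close> z that by auto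
qed

lemma D_prop: "x \<in> Z \<Longrightarrow> y \<in> Z \<Longrightarrow> N (x - y) \<le> D" "0 \<le> D"
proof -
  have c: "continuous_on (Z \<times> Z) (\<lambda>p. N (fst p - snd p))"
    by (intro continuous_on_compose2[OF norm_cont[OF norm, of UNIV]] continuous_intros) auto
  have "compact ((\<lambda>p. N (fst p - snd p)) ` (Z \<times> Z))"
    by (intro compact_continuous_image c compact_Times Z_compact)
  then have b: "bdd_above ((\<lambda>p. N (fst p - snd p)) ` (Z \<times> Z))"
    by (intro bounded_imp_bdd_above compact_imp_bounded)
  show "N (x - y) \<le> D" if "x \<in> Z" "y \<in> Z" for x y
    unfolding D_def ndiam_def using cSUP_upper[OF _ b, of "(x, y)"] that by auto
  obtain z where "z \<in> Z" using Zne by blast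
  then have "N (z - z) \<le> D" using cSUP_upper[OF _ b, of "(z, z)"] unfolding D_def ndiam_def by auto
  then show "0 \<le> D" using isn(1)[OF norm] by simp
qed

lemma M_prop: assumes "p \<in> Xs" shows "dual_norm N (gf p) \<le> M"
proof -
  obtain c where c: "c > 0" "\<forall>y. dual_norm N y \<le> norm y / c" using dual_le[OF norm] by blast
  have "compact (gf ` Xs)" using Xs_compact f_C1
    by (intro compact_continuous_image) (auto intro: continuous_on_subset)
  then obtain b where b: "\<forall>x\<in>Xs. norm (gf x) \<le> b" using compact_imp_bounded bounded_pos by (metis image_eqI)
  have "bdd_above ((\<lambda>x. dual_norm N (gf x)) ` Xs)"
  proof (rule bdd_aboveI2)
    fix x assume "x \<in> Xs"
    then show "dual_norm N (gf x) \<le> b / c" using b c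
      by (metis divide_right_mono less_eq_real_def order_trans)
  qed
  then show ?thesis unfolding M_def by (rule cSUP_upper[OF assms])
qed

lemma proj: assumes "x \<in> Z" shows "\<exists>p\<in>Xs. N (x - p) = ndist N x Xs"
proof -
  have c: "continuous_on Xs (\<lambda>y. N (x - y))"
    by (intro continuous_on_compose2[OF norm_cont[OF norm, of UNIV]] continuous_intros) auto
  obtain p where p: "p \<in> Xs" "\<forall>y\<in>Xs. N (x - p) \<le> N (x - y)"
    using continuous_attains_inf[OF Xs_compact Xs_ne c] by blast
  have "ndist N x Xs = N (x - p)" unfolding ndist_def
    by (rule cInf_eq_minimum) (use p in auto)
  then show ?thesis using p by auto
qed

lemma holder_near:
  assumes x: "x \<in> Z" and t: "t \<ge> 0" and le: "g x - gs \<le> \<alpha> / r * t powr r"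
    and p: "p \<in> Xs" "N (x - p) = ndist N x Xs"
  shows "N (x - p) \<le> t"
proof -
  have "\<alpha> / r * N (x - p) powr r \<le> \<alpha> / r * t powr r"
    using holder_EB x p le by (auto simp: Xs_def gs_def)
  then have le2: "N (x - p) powr r \<le> t powr r" using alpha_pos r_ge1 by (simp add: field_simps)
  have "N (x - p) \<le> t"
  proof (rule ccontr)
    assume "\<not> N (x - p) \<le> t"
    then have "t powr r < N (x - p) powr r" using t r_ge1 by (intro powr_less_mono2) auto
    then show False using le2 by simp
  qed
  then show ?thesis .
qed

lemma Xs_cut: assumes "x0 \<in> Z" "xk \<in> Z" shows "Xs \<subseteq> cut_set Z g gg x0 xk"
proof
  fix s assume s: "s \<in> Xs"
  have "g xk + gg xk \<bullet> (s - xk) \<le> g s"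
    using grad_ineq[OF g_convex] g_grad Z_sub_U assms by blast
  moreover have "g s = gs" "gs \<le> g x0" using s gs_prop(2)[OF assms(1)] by (auto simp: Xs_eq)
  ultimately show "s \<in> cut_set Z g gg x0 xk" using s Xs_sub by (auto simp: cut_set_def)
qed

lemma fw_upper:
  assumes "x0 \<in> Z" "xk \<in> Z" "\<forall>t\<in>cut_set Z g gg x0 xk. gf xk \<bullet> sk \<le> gf xk \<bullet> t"
  shows "fw_gap Z g gf xk \<le> gf xk \<bullet> (xk - sk)"
  unfolding fw_gap_def Xs_def[symmetric]
proof (rule cSUP_least[OF Xs_ne])
  fix s assume "s \<in> Xs"
  then have "gf xk \<bullet> sk \<le> gf xk \<bullet> s" using Xs_cut[OF assms(1,2)] assms(3) by blast
  then show "gf xk \<bullet> (xk - s) \<le> gf xk \<bullet> (xk - sk)" by (simp add: inner_diff_right)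
qed

lemma fw_lower:
  assumes "p \<in> Xs"
  shows "gf x \<bullet> (x - p) \<le> fw_gap Z g gf x"
proof -
  have "compact ((\<lambda>s. gf x \<bullet> (x - s)) ` Xs)"
    by (intro compact_continuous_image Xs_compact continuous_intros)
  then have "bdd_above ((\<lambda>s. gf x \<bullet> (x - s)) ` Xs)"
    by (intro bounded_imp_bdd_above compact_imp_bounded)
  then show ?thesis unfolding fw_gap_def Xs_def[symmetric] using assms by (rule cSUP_upper2) simp
qed

end



context bil begin

lemma run_in_Z:
  assumes run: "cgbio_run Z g gg gf E \<gamma> x s" and \<gamma>: "\<And>k. 0 \<le> \<gamma> k \<and> \<gamma> k \<le> 1"
  shows "x k \<in> Z" "s k \<in> Z"
proof -
  have sZ: "s k \<in> Z" for k using run by (auto simp: cgbio_run_def cut_set_def)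
  then show "s k \<in> Z" .
  show "x k \<in> Z"
  proof (induction k)
    case 0 then show ?case using run by (simp add: cgbio_run_def)
  next
    case (Suc k)
    have "x (Suc k) = (1 - \<gamma> k) *\<^sub>R x k + \<gamma> k *\<^sub>R s k" using run by (simp add: cgbio_run_def)
    also have "\<dots> \<in> Z" using Z_convex Suc sZ[of k] \<gamma>[of k] by (simp add: convex_alt)
    finally show ?case .
  qed
qed

lemma run_diff:
  assumes run: "cgbio_run Z g gg gf E \<gamma> x s"
  shows "x (Suc k) - x k = \<gamma> k *\<^sub>R (s k - x k)"
  using run by (simp add: cgbio_run_def algebra_simps)

lemma run_N:
  assumes run: "cgbio_run Z g gg gf E \<gamma> x s" and \<gamma>: "\<And>k. 0 \<le> \<gamma> k \<and> \<gamma> k \<le> 1"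
  shows "(N (x (Suc k) - x k))^2 \<le> (\<gamma> k)^2 * D^2"
proof -
  have "N (x (Suc k) - x k) = \<gamma> k * N (s k - x k)"
    using run_diff[OF run] isn(6)[OF norm] \<gamma>[of k] by simp
  also have "\<dots> \<le> \<gamma> k * D" using D_prop(1)[OF run_in_Z(2,1)[OF run \<gamma>]] \<gamma>[of k]
    by (intro mult_left_mono) auto
  finally have "N (x (Suc k) - x k) \<le> \<gamma> k * D" .
  then have "(N (x (Suc k) - x k))^2 \<le> (\<gamma> k * D)^2"
    using isn(4)[OF norm] by (intro power_mono) auto
  then show ?thesis by (simp add: power_mult_distrib)
qed

lemma step_f:
  assumes run: "cgbio_run Z g gg gf E \<gamma> x s" and \<gamma>: "\<And>k. 0 \<le> \<gamma> k \<and> \<gamma> k \<le> 1"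
  shows "f (x (Suc k)) \<le> f (x k) + \<gamma> k * (gf (x k) \<bullet> (s k - x k)) + Lf/2 * (\<gamma> k)^2 * D^2"
proof -
  have "f (x (Suc k)) \<le> f (x k) + gf (x k) \<bullet> (x (Suc k) - x k) + Lf/2 * (N (x (Suc k) - x k))^2"
    by (rule descent[OF norm convex_UNIV subset_refl, of f gf Lf]) (use f_grad f_Lip in auto)
  also have "\<dots> \<le> f (x k) + gf (x k) \<bullet> (x (Suc k) - x k) + Lf/2 * ((\<gamma> k)^2 * D^2)"
    using run_N[OF run \<gamma>, of k] Lf_pos by (intro add_left_mono mult_left_mono) auto
  finally show ?thesis using run_diff[OF run, of k] by simp
qed

lemma step_g:
  assumes run: "cgbio_run Z g gg gf E \<gamma> x s" and \<gamma>: "\<And>k. 0 \<le> \<gamma> k \<and> \<gamma> k \<le> 1"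
  shows "g (x (Suc k)) \<le> g (x k) + \<gamma> k * (g (x 0) - g (x k)) + Lg/2 * (\<gamma> k)^2 * D^2"
proof -
  have "g (x (Suc k)) \<le> g (x k) + gg (x k) \<bullet> (x (Suc k) - x k) + Lg/2 * (N (x (Suc k) - x k))^2"
    by (rule descent[OF norm Z_convex Z_sub_U, of g gg Lg]) (use g_grad g_Lip run_in_Z[OF run \<gamma>] in auto)
  also have "\<dots> \<le> g (x k) + gg (x k) \<bullet> (x (Suc k) - x k) + Lg/2 * ((\<gamma> k)^2 * D^2)"
    using run_N[OF run \<gamma>, of k] Lg_pos by (intro add_left_mono mult_left_mono) auto
  also have "gg (x k) \<bullet> (x (Suc k) - x k) = \<gamma> k * (gg (x k) \<bullet> (s k - x k))"
    using run_diff[OF run, of k] by simp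
  also have "\<dots> \<le> \<gamma> k * (g (x 0) - g (x k))"
    using run \<gamma>[of k] by (intro mult_left_mono) (auto simp: cgbio_run_def cut_set_def)
  finally show ?thesis by simp
qed

end



context bil begin

lemma lower_f:
  assumes cf: "convex_on UNIV f" and xZ: "y \<in> Z" and Mp: "M > 0" and ep: "\<epsilon> > 0"
    and gle: "g y - gs \<le> \<alpha> / r * (\<epsilon> / M) powr r"
  shows "fs - \<epsilon> \<le> f y"
proof -
  obtain p where p: "p \<in> Xs" "N (y - p) = ndist N y Xs" using proj[OF xZ] by blast
  have d: "N (y - p) \<le> \<epsilon> / M" by (rule holder_near[OF xZ _ gle p]) (use ep Mp in simp)
  have "f p + gf p \<bullet> (y - p) \<le> f y" using grad_ineq[OF cf] f_grad by blast
  moreover have "- (dual_norm N (gf p) * N (y - p)) \<le> gf p \<bullet> (y - p)" by (rule dual_ineq'[OF norm])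
  moreover have "dual_norm N (gf p) * N (y - p) \<le> M * (\<epsilon> / M)"
    using M_prop[OF p(1)] d dual_nonneg[OF norm] isn(4)[OF norm] Mp
    by (intro mult_mono) auto
  moreover have "fs \<le> f p" using fs_prop(2)[OF p(1)] .
  ultimately show ?thesis using Mp by simp
qed

lemma part1:
  assumes cf: "convex_on UNIV f" and Mp: "M > 0"
  shows "\<exists>C>0. \<forall>\<^sub>F \<epsilon> in at_right 0.
         \<forall>x s. cgbio_run Z g gg gf (\<alpha> / r * (\<epsilon> / M) powr r) (\<lambda>k. 2 / (real k + 2)) x s \<longrightarrow>
              (\<forall>K::nat. real K \<ge> C / \<epsilon> powr r \<longrightarrow>
                 \<bar>f (x K) - fs\<bar> \<le> \<epsilon> \<and> g (x K) - gs \<le> \<alpha> / r * (\<epsilon> / M) powr r)"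
proof -
  define C where "C = 4 * Lg * D^2 * r * (M powr r) / \<alpha> + 2 * Lf * D^2 + 1"
  have C0: "4 * Lg * D^2 * r * (M powr r) / \<alpha> \<ge> 0" using Lg_pos r_ge1 alpha_pos by simp
  have C1: "2 * Lf * D^2 \<ge> 0" using Lf_pos by simp
  have Cp: "C > 0" using C0 C1 by (simp add: C_def)
  have ev: "\<forall>\<^sub>F \<epsilon> in at_right (0::real). \<epsilon> \<in> {0<..<1}" using eventually_at_right_real[of 0 1] by simp
  have "\<forall>\<^sub>F \<epsilon> in at_right 0.
         \<forall>x s. cgbio_run Z g gg gf (\<alpha> / r * (\<epsilon> / M) powr r) (\<lambda>k. 2 / (real k + 2)) x s \<longrightarrow>
              (\<forall>K::nat. real K \<ge> C / \<epsilon> powr r \<longrightarrow>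
                 \<bar>f (x K) - fs\<bar> \<le> \<epsilon> \<and> g (x K) - gs \<le> \<alpha> / r * (\<epsilon> / M) powr r)"
  proof (rule eventually_mono[OF ev], intro allI impI)
    fix \<epsilon> :: real and x s and K :: nat
    assume e: "\<epsilon> \<in> {0<..<1}"
    define E where "E = \<alpha> / r * (\<epsilon> / M) powr r"
    define \<gamma> where "\<gamma> = (\<lambda>k::nat. 2 / (real k + 2))"
    assume run0: "cgbio_run Z g gg gf (\<alpha> / r * (\<epsilon> / M) powr r) (\<lambda>k. 2 / (real k + 2)) x s"
    then have run: "cgbio_run Z g gg gf E \<gamma> x s" by (simp add: E_def \<gamma>_def)
    assume KC: "C / \<epsilon> powr r \<le> real K"
    have ep: "\<epsilon> > 0" "\<epsilon> < 1" using e by auto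
    have er: "\<epsilon> powr r > 0" using ep by simp
    have erle: "\<epsilon> powr r \<le> \<epsilon>" using powr_mono'[of 1 r \<epsilon>] ep r_ge1 by simp
    have \<gamma>01: "0 \<le> \<gamma> k \<and> \<gamma> k \<le> 1" for k by (simp add: \<gamma>_def)
    have xZ: "x k \<in> Z" for k using run_in_Z[OF run \<gamma>01] by blast
    have KCe: "C \<le> real K * \<epsilon> powr r" using KC er by (simp add: field_simps)
    then have Kp: "K > 0" using Cp er by (cases K) auto
    then obtain K' where K': "K = Suc K'" by (cases K) auto
    have Eeq: "E = \<alpha> / r * \<epsilon> powr r / M powr r" using ep Mp by (simp add: E_def powr_divide)
    have Ep: "E > 0" using Eeq alpha_pos r_ge1 ep Mp by simp
    have x0: "g (x 0) - gs \<le> E / 2" using run by (simp add: cgbio_run_def gs_def)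
    have gk: "\<gamma> k = 2 / (real k + 2)" for k by (simp add: \<gamma>_def)
    obtain p where p: "p \<in> Xs" "f p = fs" using fs_prop(1) by blast
    have fa0: "f (x (Suc k)) - fs \<le> (1 - \<gamma> k) * (f (x k) - fs) + (Lf * D^2) * (\<gamma> k)^2 / 2" for k
    proof -
      have "p \<in> cut_set Z g gg (x 0) (x k)" using Xs_cut[OF xZ xZ] p(1) by blast
      then have "gf (x k) \<bullet> s k \<le> gf (x k) \<bullet> p" using run by (auto simp: cgbio_run_def)
      moreover have "f (x k) + gf (x k) \<bullet> (p - x k) \<le> f p" using grad_ineq[OF cf] f_grad by blast
      ultimately have "gf (x k) \<bullet> (s k - x k) \<le> fs - f (x k)" using p(2) by (simp add: inner_diff_right)
      then have "\<gamma> k * (gf (x k) \<bullet> (s k - x k)) \<le> \<gamma> k * (fs - f (x k))"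
        using \<gamma>01[of k] by (intro mult_left_mono) auto
      moreover have "(1 - \<gamma> k) * (f (x k) - fs) + (Lf * D^2) * (\<gamma> k)^2 / 2 = f (x k) - fs + \<gamma> k * (fs - f (x k)) + Lf/2 * (\<gamma> k)^2 * D^2"
        by (simp add: algebra_simps)
      ultimately show ?thesis using step_f[OF run \<gamma>01, of k] by linarith
    qed
    have fa: "f (x (Suc k)) - fs \<le> (1 - 2/(real k + 2)) * (f (x k) - fs) + (Lf * D^2) * (2/(real k + 2))^2 / 2" for k
      using fa0[of k] unfolding gk .
    have fK: "f (x K) - fs \<le> 2 * (Lf * D^2) / (real K + 2)"
      using fw_rec[of "Lf * D^2" "\<lambda>k. f (x k) - fs", OF _ fa] Lf_pos K' by simp
    have "2 * (Lf * D^2) \<le> C * 1" using C0 by (simp add: C_def)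
    also have "\<dots> \<le> real K * \<epsilon> powr r" using KCe by simp
    also have "\<dots> \<le> real K * \<epsilon>" using erle by (intro mult_left_mono) auto
    also have "\<dots> \<le> (real K + 2) * \<epsilon>" using ep by (intro mult_right_mono) auto
    finally have "2 * (Lf * D^2) / (real K + 2) \<le> \<epsilon>" by (simp add: field_simps)
    with fK have fup: "f (x K) - fs \<le> \<epsilon>" by linarith
    have ga0: "g (x (Suc k)) - g (x 0) \<le> (1 - \<gamma> k) * (g (x k) - g (x 0)) + (Lg * D^2) * (\<gamma> k)^2 / 2" for k
    proof -
      have "(1 - \<gamma> k) * (g (x k) - g (x 0)) + (Lg * D^2) * (\<gamma> k)^2 / 2 = g (x k) - g (x 0) + \<gamma> k * (g (x 0) - g (x k)) + Lg/2 * (\<gamma> k)^2 * D^2"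
        by (simp add: algebra_simps)
      then show ?thesis using step_g[OF run \<gamma>01, of k] by linarith
    qed
    have ga: "g (x (Suc k)) - g (x 0) \<le> (1 - 2/(real k + 2)) * (g (x k) - g (x 0)) + (Lg * D^2) * (2/(real k + 2))^2 / 2" for k
      using ga0[of k] unfolding gk .
    have gK: "g (x K) - g (x 0) \<le> 2 * (Lg * D^2) / (real K + 2)"
      using fw_rec[of "Lg * D^2" "\<lambda>k. g (x k) - g (x 0)", OF _ ga] Lg_pos K' by simp
    have "4 * Lg * D^2 * r * (M powr r) / \<alpha> \<le> C" using C1 by (simp add: C_def)
    also have "\<dots> \<le> real K * \<epsilon> powr r" by (rule KCe)
    finally have "4 * Lg * D^2 \<le> real K * \<epsilon> powr r * \<alpha> / (r * M powr r)"
      using alpha_pos r_ge1 Mp by (simp add: field_simps)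
    also have "\<dots> = real K * E" using Eeq r_ge1 Mp by (simp add: field_simps)
    also have "\<dots> \<le> (real K + 2) * E" using Ep by (intro mult_right_mono) auto
    finally have "2 * (Lg * D^2) / (real K + 2) \<le> E / 2" by (simp add: field_simps)
    with gK x0 have gup: "g (x K) - gs \<le> E" by linarith
    have "fs - \<epsilon> \<le> f (x K)" by (rule lower_f[OF cf xZ Mp ep(1)]) (use gup in \<open>simp add: E_def\<close>)
    with fup gup show "\<bar>f (x K) - fs\<bar> \<le> \<epsilon> \<and> g (x K) - gs \<le> \<alpha> / r * (\<epsilon> / M) powr r"
      by (simp add: E_def abs_le_iff)
  qed
  then show ?thesis using Cp by blast
qed

end



context bil begin

lemma fw_abs:
  assumes xZ: "y \<in> Z" and Mp: "M > 0" and ep: "\<epsilon> > 0"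
    and g1: "g y - gs \<le> \<alpha> / r * (\<epsilon> / (2 * M)) powr r"
    and g2: "g y - gs \<le> \<alpha> / r * (\<epsilon> / (2 * Lf)) powr (r / 2)"
  shows "- \<epsilon> \<le> fw_gap Z g gf y"
proof -
  obtain p where p: "p \<in> Xs" "N (y - p) = ndist N y Xs" using proj[OF xZ] by blast
  define d where "d = N (y - p)"
  have d0: "0 \<le> d" using isn(4)[OF norm] by (simp add: d_def)
  have d1: "d \<le> \<epsilon> / (2 * M)" unfolding d_def
    by (rule holder_near[OF xZ _ g1 p]) (use ep Mp in simp)
  define t2 where "t2 = (\<epsilon> / (2 * Lf)) powr (1/2)"
  have t2r: "t2 powr r = (\<epsilon> / (2 * Lf)) powr (r / 2)" unfolding t2_def using ep Lf_pos
    by (simp add: powr_powr)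
  have d2: "d \<le> t2" unfolding d_def
    by (rule holder_near[OF xZ _ _ p]) (use ep Lf_pos g2 t2r in \<open>auto simp: t2_def\<close>)
  have t2s: "t2 = sqrt (\<epsilon> / (2 * Lf))" unfolding t2_def using ep Lf_pos by (simp add: powr_half_sqrt)
  have "d * d \<le> t2 * t2" using d0 d2 by (intro mult_mono) auto
  also have "\<dots> = \<epsilon> / (2 * Lf)" using ep Lf_pos by (simp add: t2s)
  finally have dd: "d * d \<le> \<epsilon> / (2 * Lf)" .
  have A: "- (dual_norm N (gf p) * d) \<le> gf p \<bullet> (y - p)" unfolding d_def by (rule dual_ineq'[OF norm])
  have B: "- (dual_norm N (gf y - gf p) * d) \<le> (gf y - gf p) \<bullet> (y - p)" unfolding d_def by (rule dual_ineq'[OF norm])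
  have A': "dual_norm N (gf p) * d \<le> M * (\<epsilon> / (2 * M))"
    using M_prop[OF p(1)] d0 d1 dual_nonneg[OF norm] Mp by (intro mult_mono) auto
  have B': "dual_norm N (gf y - gf p) * d \<le> (Lf * d) * d"
    using f_Lip d0 by (intro mult_right_mono) (auto simp: d_def)
  have B'': "(Lf * d) * d \<le> Lf * (\<epsilon> / (2 * Lf))" using mult_left_mono[OF dd, of Lf] Lf_pos by (simp add: mult.assoc)
  have "gf y \<bullet> (y - p) = gf p \<bullet> (y - p) + (gf y - gf p) \<bullet> (y - p)" by (simp add: inner_diff_left)
  moreover have "gf y \<bullet> (y - p) \<le> fw_gap Z g gf y" by (rule fw_lower[OF p(1)])
  moreover have "M * (\<epsilon> / (2 * M)) = \<epsilon> / 2" "Lf * (\<epsilon> / (2 * Lf)) = \<epsilon> / 2" using Mp Lf_pos by auto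
  ultimately show ?thesis using A B A' B' B'' by linarith
qed

lemma part2_D0:
  assumes D0: "D = 0"
  shows "\<exists>C>0. \<forall>\<^sub>F \<epsilon> in at_right 0.
     \<forall>x s. cgbio_run Z g gg gf (min (\<alpha> / r * (\<epsilon> / (2 * M)) powr r) (\<alpha> / r * (\<epsilon> / (2 * Lf)) powr (r / 2)))
             (\<lambda>k. min (\<epsilon> / (Lf * D\<^sup>2)) ((min (\<alpha> / r * (\<epsilon> / (2 * M)) powr r) (\<alpha> / r * (\<epsilon> / (2 * Lf)) powr (r / 2))) / (Lg * D\<^sup>2))) x s \<longrightarrow>
       (\<forall>K::nat. real K \<ge> C / \<epsilon> powr (r + 1) \<longrightarrow>
          (\<exists>k<K. \<bar>fw_gap Z g gf (x k)\<bar> \<le> \<epsilon> \<and> g (x k) - gs \<le> min (\<alpha> / r * (\<epsilon> / (2 * M)) powr r) (\<alpha> / r * (\<epsilon> / (2 * Lf)) powr (r / 2))))"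
proof -
  have ev: "\<forall>\<^sub>F \<epsilon> in at_right (0::real). 0 < \<epsilon>" by (rule eventually_at_right_less)
  have ev2: "\<forall>\<^sub>F \<epsilon> in at_right 0.
     \<forall>x s. cgbio_run Z g gg gf (min (\<alpha> / r * (\<epsilon> / (2 * M)) powr r) (\<alpha> / r * (\<epsilon> / (2 * Lf)) powr (r / 2)))
             (\<lambda>k. min (\<epsilon> / (Lf * D\<^sup>2)) ((min (\<alpha> / r * (\<epsilon> / (2 * M)) powr r) (\<alpha> / r * (\<epsilon> / (2 * Lf)) powr (r / 2))) / (Lg * D\<^sup>2))) x s \<longrightarrow>
       (\<forall>K::nat. real K \<ge> 1 / \<epsilon> powr (r + 1) \<longrightarrow>
          (\<exists>k<K. \<bar>fw_gap Z g gf (x k)\<bar> \<le> \<epsilon> \<and> g (x k) - gs \<le> min (\<alpha> / r * (\<epsilon> / (2 * M)) powr r) (\<alpha> / r * (\<epsilon> / (2 * Lf)) powr (r / 2))))"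
    proof (rule eventually_mono[OF ev], intro allI impI)
      fix \<epsilon> :: real and x s and K :: nat
      assume ep: "0 < \<epsilon>"
      assume run: "cgbio_run Z g gg gf (min (\<alpha> / r * (\<epsilon> / (2 * M)) powr r) (\<alpha> / r * (\<epsilon> / (2 * Lf)) powr (r / 2)))
             (\<lambda>k. min (\<epsilon> / (Lf * D\<^sup>2)) ((min (\<alpha> / r * (\<epsilon> / (2 * M)) powr r) (\<alpha> / r * (\<epsilon> / (2 * Lf)) powr (r / 2))) / (Lg * D\<^sup>2))) x s"
      assume K: "1 / \<epsilon> powr (r + 1) \<le> real K"
      have "1 / \<epsilon> powr (r + 1) > 0" using ep by simp
      then have Kp: "0 < K" using K by (cases K) auto
      have x0: "x 0 \<in> Z" using run by (simp add: cgbio_run_def)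
      have single: "y = x 0" if "y \<in> Z" for y
        using D_prop(1)[OF that x0] D0 isn(4,7)[OF norm, of "y - x 0"] by simp
      have XS: "Xs = {x 0}" using Xs_sub Xs_ne single by blast
      have gx0: "g (x 0) = gs" using XS by (auto simp: Xs_eq)
      have fw: "fw_gap Z g gf (x 0) = 0" unfolding fw_gap_def Xs_def[symmetric] XS by simp
      have "0 \<le> min (\<alpha> / r * (\<epsilon> / (2 * M)) powr r) (\<alpha> / r * (\<epsilon> / (2 * Lf)) powr (r / 2))"
        using alpha_pos r_ge1 by simp
      then show "\<exists>k<K. \<bar>fw_gap Z g gf (x k)\<bar> \<le> \<epsilon> \<and> g (x k) - gs \<le> min (\<alpha> / r * (\<epsilon> / (2 * M)) powr r) (\<alpha> / r * (\<epsilon> / (2 * Lf)) powr (r / 2))"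
        using Kp fw gx0 ep by (intro exI[of _ 0]) auto
    qed
  show ?thesis using ev2 zero_less_one by blast
qed

end



context bil begin

lemma part2_Dpos:
  assumes Dp: "D > 0" and Mp: "M > 0"
  shows "\<exists>C>0. \<forall>\<^sub>F \<epsilon> in at_right 0.
     \<forall>x s. cgbio_run Z g gg gf (min (\<alpha> / r * (\<epsilon> / (2 * M)) powr r) (\<alpha> / r * (\<epsilon> / (2 * Lf)) powr (r / 2)))
             (\<lambda>k. min (\<epsilon> / (Lf * D\<^sup>2)) ((min (\<alpha> / r * (\<epsilon> / (2 * M)) powr r) (\<alpha> / r * (\<epsilon> / (2 * Lf)) powr (r / 2))) / (Lg * D\<^sup>2))) x s \<longrightarrow>
       (\<forall>K::nat. real K \<ge> C / \<epsilon> powr (r + 1) \<longrightarrow>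
          (\<exists>k<K. \<bar>fw_gap Z g gf (x k)\<bar> \<le> \<epsilon> \<and> g (x k) - gs \<le> min (\<alpha> / r * (\<epsilon> / (2 * M)) powr r) (\<alpha> / r * (\<epsilon> / (2 * Lf)) powr (r / 2))))"
proof -
  have "compact (f ` Z)" by (intro compact_continuous_image f_cont Z_compact)
  then obtain F where F: "F > 0" "\<forall>z\<in>Z. \<bar>f z\<bar> \<le> F"
    using compact_imp_bounded bounded_pos by (metis image_eqI real_norm_def)
  define p1 where "p1 = (1 / (2 * M)) powr r"
  define p2 where "p2 = (1 / (2 * Lf)) powr (r / 2)"
  define a0 where "a0 = \<alpha> / r * min p1 p2"
  define c0 where "c0 = min (1 / (Lf * D\<^sup>2)) (a0 / (Lg * D\<^sup>2))"
  define C where "C = 4 * F / c0 + 1"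
  have LfD: "Lf * D\<^sup>2 > 0" using Lf_pos Dp by simp
  have LgD: "Lg * D\<^sup>2 > 0" using Lg_pos Dp by simp
  have p1p: "p1 > 0" "p2 > 0" using Mp Lf_pos by (auto simp: p1_def p2_def)
  have a0p: "a0 > 0" using p1p alpha_pos r_ge1 by (simp add: a0_def)
  have c0p: "c0 > 0" using a0p LfD LgD by (simp add: c0_def)
  have "4 * F / c0 > 0" using F c0p by simp
  then have Cp: "C > 0" by (simp add: C_def)
  have Cc0: "C * c0 = 4 * F + c0" using c0p by (simp add: C_def field_simps)
  have ev: "\<forall>\<^sub>F \<epsilon> in at_right (0::real). \<epsilon> \<in> {0<..<min 1 (Lf * D\<^sup>2)}"
    using eventually_at_right_real[of 0 "min 1 (Lf * D\<^sup>2)"] LfD by simp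
  have ev2: "\<forall>\<^sub>F \<epsilon> in at_right 0.
     \<forall>x s. cgbio_run Z g gg gf (min (\<alpha> / r * (\<epsilon> / (2 * M)) powr r) (\<alpha> / r * (\<epsilon> / (2 * Lf)) powr (r / 2)))
             (\<lambda>k. min (\<epsilon> / (Lf * D\<^sup>2)) ((min (\<alpha> / r * (\<epsilon> / (2 * M)) powr r) (\<alpha> / r * (\<epsilon> / (2 * Lf)) powr (r / 2))) / (Lg * D\<^sup>2))) x s \<longrightarrow>
       (\<forall>K::nat. real K \<ge> C / \<epsilon> powr (r + 1) \<longrightarrow>
          (\<exists>k<K. \<bar>fw_gap Z g gf (x k)\<bar> \<le> \<epsilon> \<and> g (x k) - gs \<le> min (\<alpha> / r * (\<epsilon> / (2 * M)) powr r) (\<alpha> / r * (\<epsilon> / (2 * Lf)) powr (r / 2))))"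
  proof (rule eventually_mono[OF ev], intro allI impI)
    fix \<epsilon> :: real and x s and K :: nat
    assume e: "\<epsilon> \<in> {0<..<min 1 (Lf * D\<^sup>2)}"
    define T1 where "T1 = \<alpha> / r * (\<epsilon> / (2 * M)) powr r"
    define T2 where "T2 = \<alpha> / r * (\<epsilon> / (2 * Lf)) powr (r / 2)"
    define E where "E = min T1 T2"
    define \<gamma> where "\<gamma> = min (\<epsilon> / (Lf * D\<^sup>2)) (E / (Lg * D\<^sup>2))"
    assume run0: "cgbio_run Z g gg gf (min (\<alpha> / r * (\<epsilon> / (2 * M)) powr r) (\<alpha> / r * (\<epsilon> / (2 * Lf)) powr (r / 2)))
             (\<lambda>k. min (\<epsilon> / (Lf * D\<^sup>2)) ((min (\<alpha> / r * (\<epsilon> / (2 * M)) powr r) (\<alpha> / r * (\<epsilon> / (2 * Lf)) powr (r / 2))) / (Lg * D\<^sup>2))) x s"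
    then have run: "cgbio_run Z g gg gf E (\<lambda>k. \<gamma>) x s" by (simp add: E_def T1_def T2_def \<gamma>_def)
    assume KC: "C / \<epsilon> powr (r + 1) \<le> real K"
    have ep: "\<epsilon> > 0" "\<epsilon> < 1" "\<epsilon> < Lf * D\<^sup>2" using e by auto
    have er: "\<epsilon> powr r > 0" using ep by simp
    have erle: "\<epsilon> powr r \<le> \<epsilon>" using powr_mono'[of 1 r \<epsilon>] ep r_ge1 by simp
    have erle2: "\<epsilon> powr r \<le> \<epsilon> powr (r / 2)" using powr_mono'[of "r/2" r \<epsilon>] ep r_ge1 by simp
    have er1: "\<epsilon> powr (r + 1) = \<epsilon> powr r * \<epsilon>" using ep by (simp add: powr_add)
    have T1eq: "T1 = \<alpha> / r * (\<epsilon> powr r * p1)" unfolding T1_def p1_def using ep Mp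
      by (simp add: powr_mult[symmetric])
    have T2eq: "T2 = \<alpha> / r * (\<epsilon> powr (r / 2) * p2)" unfolding T2_def p2_def using ep Lf_pos
      by (simp add: powr_mult[symmetric])
    have ar: "\<alpha> / r > 0" using alpha_pos r_ge1 by simp
    have "a0 * \<epsilon> powr r \<le> T1"
    proof -
      have "min p1 p2 * \<epsilon> powr r \<le> p1 * \<epsilon> powr r"
        using er by (intro mult_right_mono) auto
      then have "\<alpha> / r * (min p1 p2 * \<epsilon> powr r) \<le> \<alpha> / r * (p1 * \<epsilon> powr r)"
        using ar by (intro mult_left_mono) auto
      then show ?thesis unfolding T1eq a0_def by (simp only: mult_ac)
    qed
    moreover have "a0 * \<epsilon> powr r \<le> T2"
    proof -
      have "min p1 p2 * \<epsilon> powr r \<le> p2 * \<epsilon> powr (r / 2)"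
        using p1p er erle2 by (intro mult_mono) auto
      then have "\<alpha> / r * (min p1 p2 * \<epsilon> powr r) \<le> \<alpha> / r * (p2 * \<epsilon> powr (r / 2))"
        using ar by (intro mult_left_mono) auto
      then show ?thesis unfolding T2eq a0_def by (simp only: mult_ac)
    qed
    ultimately have Ea0: "a0 * \<epsilon> powr r \<le> E" by (simp add: E_def)
    have Ep: "E > 0" using Ea0 a0p er by (meson mult_pos_pos order_less_le_trans)
    have \<gamma>p: "\<gamma> > 0" using ep Ep LfD LgD by (simp add: \<gamma>_def)
    have \<gamma>1: "\<gamma> \<le> \<epsilon> / (Lf * D\<^sup>2)" "\<gamma> \<le> E / (Lg * D\<^sup>2)" by (auto simp: \<gamma>_def)
    have "\<epsilon> / (Lf * D\<^sup>2) < 1" using ep LfD by simp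
    then have \<gamma>le1: "\<gamma> \<le> 1" using \<gamma>1(1) by linarith
    have \<gamma>01: "\<And>k. 0 \<le> \<gamma> \<and> \<gamma> \<le> 1" using \<gamma>p \<gamma>le1 by auto
    have LfG: "Lf * \<gamma> * D\<^sup>2 \<le> \<epsilon>" using \<gamma>1(1) LfD by (simp add: field_simps)
    have LgG: "Lg * \<gamma> * D\<^sup>2 \<le> E" using \<gamma>1(2) LgD by (simp add: field_simps)
    have \<gamma>c0: "c0 * \<epsilon> powr r \<le> \<gamma>"
    proof -
      have "c0 * \<epsilon> powr r \<le> \<epsilon> / (Lf * D\<^sup>2)"
      proof -
        have "c0 * \<epsilon> powr r \<le> 1 / (Lf * D\<^sup>2) * \<epsilon>"
          using er erle LfD by (intro mult_mono) (auto simp: c0_def)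
        then show ?thesis by simp
      qed
      moreover have "c0 * \<epsilon> powr r \<le> E / (Lg * D\<^sup>2)"
      proof -
        have "c0 * \<epsilon> powr r \<le> a0 / (Lg * D\<^sup>2) * \<epsilon> powr r"
          using er by (intro mult_right_mono) (auto simp: c0_def)
        also have "\<dots> = (a0 * \<epsilon> powr r) / (Lg * D\<^sup>2)" by simp
        also have "\<dots> \<le> E / (Lg * D\<^sup>2)" using Ea0 LgD by (intro divide_right_mono) auto
        finally show ?thesis .
      qed
      ultimately show ?thesis by (simp add: \<gamma>_def)
    qed
    have xZ: "x k \<in> Z" for k using run_in_Z[OF run \<gamma>01] by blast
    have x0: "g (x 0) - gs \<le> E / 2" using run by (simp add: cgbio_run_def gs_def)
    have gb: "g (x k) - gs \<le> E" for k
    proof (rule const_rec[of \<gamma> "\<lambda>k. g (x k) - gs"])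
      show "0 \<le> \<gamma>" "\<gamma> \<le> 1" using \<gamma>01 by auto
      show "g (x 0) - gs \<le> E" using x0 Ep by simp
      fix k
      have "Lg/2 * \<gamma>\<^sup>2 * D\<^sup>2 = \<gamma> / 2 * (Lg * \<gamma> * D\<^sup>2)" by (simp add: power2_eq_square)
      also have "\<dots> \<le> \<gamma> / 2 * E" using LgG \<gamma>p by (intro mult_left_mono) auto
      finally have A: "Lg/2 * \<gamma>\<^sup>2 * D\<^sup>2 \<le> \<gamma> / 2 * E" .
      have B: "\<gamma> * (g (x 0) - gs) \<le> \<gamma> * (E / 2)" using x0 \<gamma>p by (intro mult_left_mono) auto
      have "(1 - \<gamma>) * (g (x k) - gs) + \<gamma> * (g (x 0) - gs) = g (x k) - gs + \<gamma> * (g (x 0) - g (x k))"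
        by (simp add: algebra_simps)
      then show "g (x (Suc k)) - gs \<le> (1 - \<gamma>) * (g (x k) - gs) + \<gamma> * E"
        using step_g[OF run \<gamma>01, of k] A B by simp
    qed
    define gap where "gap k = gf (x k) \<bullet> (x k - s k)" for k
    have fsum: "f (x n) \<le> f (x 0) - \<gamma> * (\<Sum>k<n. gap k) + real n * (Lf/2 * \<gamma>\<^sup>2 * D\<^sup>2)" for n
    proof (induction n)
      case 0 then show ?case by simp
    next
      case (Suc n)
      have "gf (x n) \<bullet> (s n - x n) = - gap n" by (simp add: gap_def inner_diff_right)
      then have "f (x (Suc n)) \<le> f (x n) - \<gamma> * gap n + Lf/2 * \<gamma>\<^sup>2 * D\<^sup>2"
        using step_f[OF run \<gamma>01, of n] by simp
      moreover have "real (Suc n) * (Lf/2 * \<gamma>\<^sup>2 * D\<^sup>2) = real n * (Lf/2 * \<gamma>\<^sup>2 * D\<^sup>2) + Lf/2 * \<gamma>\<^sup>2 * D\<^sup>2"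
        by (simp add: algebra_simps)
      moreover have "\<gamma> * (\<Sum>k<Suc n. gap k) = \<gamma> * (\<Sum>k<n. gap k) + \<gamma> * gap n"
        by (simp add: algebra_simps)
      ultimately show ?case using Suc by linarith
    qed
    have Kp: "K > 0"
    proof -
      have "C / \<epsilon> powr (r + 1) > 0" using Cp ep by simp
      then show ?thesis using KC by (cases K) auto
    qed
    have "\<exists>k<K. gap k \<le> \<epsilon>"
    proof (rule ccontr)
      assume "\<not> (\<exists>k<K. gap k \<le> \<epsilon>)"
      then have all: "\<forall>k\<in>{..<K}. \<epsilon> < gap k" by auto
      have "(\<Sum>k<K. \<epsilon>) < (\<Sum>k<K. gap k)"
        using Kp all by (intro sum_strict_mono) auto
      then have S: "real K * \<epsilon> < (\<Sum>k<K. gap k)" by simp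
      have "f (x K) \<le> f (x 0) - \<gamma> * (\<Sum>k<K. gap k) + real K * (Lf/2 * \<gamma>\<^sup>2 * D\<^sup>2)" by (rule fsum)
      moreover have "\<gamma> * (real K * \<epsilon>) < \<gamma> * (\<Sum>k<K. gap k)" using S \<gamma>p by simp
      moreover have "real K * (Lf/2 * \<gamma>\<^sup>2 * D\<^sup>2) \<le> real K * (\<gamma> / 2 * \<epsilon>)"
      proof -
        have "Lf/2 * \<gamma>\<^sup>2 * D\<^sup>2 = \<gamma> / 2 * (Lf * \<gamma> * D\<^sup>2)" by (simp add: power2_eq_square)
        also have "\<dots> \<le> \<gamma> / 2 * \<epsilon>" using LfG \<gamma>p by (intro mult_left_mono) auto
        finally show ?thesis by (intro mult_left_mono) auto
      qed
      moreover have "\<bar>f (x K)\<bar> \<le> F" "\<bar>f (x 0)\<bar> \<le> F" using F xZ by auto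
      moreover have "f (x 0) - f (x K) \<le> 2 * F" using calculation(4,5) by (simp add: abs_le_iff)
      ultimately have lt0: "\<gamma> * (real K * \<epsilon>) - real K * (\<gamma> / 2 * \<epsilon>) < 2 * F" by linarith
      have "\<gamma> * (real K * \<epsilon>) - real K * (\<gamma> / 2 * \<epsilon>) = real K * \<gamma> * \<epsilon> / 2" by (simp add: algebra_simps)
      then have lt: "real K * \<gamma> * \<epsilon> < 4 * F" using lt0 by linarith
      have "C \<le> real K * \<epsilon> powr (r + 1)" using KC ep by (simp add: field_simps)
      then have "C * c0 \<le> real K * (\<epsilon> powr r * \<epsilon>) * c0" using c0p er1
        by (intro mult_right_mono) auto
      also have "\<dots> = real K * (c0 * \<epsilon> powr r) * \<epsilon>" by (simp only: mult_ac)
      also have "\<dots> \<le> real K * \<gamma> * \<epsilon>" using \<gamma>c0 ep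
        by (intro mult_right_mono mult_left_mono) auto
      finally show False using lt Cc0 c0p by simp
    qed
    then obtain k where k: "k < K" "gap k \<le> \<epsilon>" by blast
    have up: "fw_gap Z g gf (x k) \<le> \<epsilon>"
      using fw_upper[OF xZ[of 0] xZ[of k], of "s k"] run k(2) by (auto simp: cgbio_run_def gap_def)
    have lo: "- \<epsilon> \<le> fw_gap Z g gf (x k)"
      by (rule fw_abs[OF xZ Mp ep(1)]) (use gb[of k] in \<open>auto simp: E_def T1_def T2_def\<close>)
    show "\<exists>k<K. \<bar>fw_gap Z g gf (x k)\<bar> \<le> \<epsilon> \<and> g (x k) - gs \<le> min (\<alpha> / r * (\<epsilon> / (2 * M)) powr r) (\<alpha> / r * (\<epsilon> / (2 * Lf)) powr (r / 2))"
      using k(1) up lo gb[of k] by (intro exI[of _ k]) (auto simp: E_def T1_def T2_def abs_le_iff)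
  qed
  show ?thesis using ev2 Cp by blast
qed

end


theorem corollary1:
  fixes N :: "'a::euclidean_space \<Rightarrow> real"
    and Z U :: "'a set"
    and f g :: "'a \<Rightarrow> real"
    and gf gg :: "'a \<Rightarrow> 'a"
    and Lf Lg \<alpha> r :: real
  assumes norm: "is_norm N"
    and Z_convex: "convex Z" and Z_compact: "compact Z"
    and U_open: "open U" and Z_sub_U: "Z \<subseteq> U"
    and g_convex: "convex_on UNIV g"
    and g_grad: "\<forall>x\<in>U. (g has_derivative (\<lambda>h. gg x \<bullet> h)) (at x)"
    and g_C1: "continuous_on U gg"
    and g_Lip: "\<forall>x\<in>U. \<forall>y\<in>U. dual_norm N (gg x - gg y) \<le> Lg * N (x - y)"
    and f_grad: "\<forall>x. (f has_derivative (\<lambda>h. gf x \<bullet> h)) (at x)"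
    and f_C1: "continuous_on UNIV gf"
    and f_Lip: "\<forall>x y. dual_norm N (gf x - gf y) \<le> Lf * N (x - y)"
    and Lf_pos: "Lf > 0" and Lg_pos: "Lg > 0"
    and alpha_pos: "\<alpha> > 0" and r_ge1: "r \<ge> 1"
    and holder_EB: "\<forall>x\<in>Z. \<alpha> / r * ndist N x (lower_argmin Z g) powr r \<le> g x - lower_min Z g"
    and M_pos: "(SUP x\<in>lower_argmin Z g. dual_norm N (gf x)) > 0"
  shows
   "(convex_on UNIV f \<longrightarrow>
      (\<exists>C>0. \<forall>\<^sub>F \<epsilon> in at_right 0.
         let M = (SUP x\<in>lower_argmin Z g. dual_norm N (gf x));
             eps_g = \<alpha> / r * (\<epsilon> / M) powr r
         in \<forall>x s. cgbio_run Z g gg gf eps_g (\<lambda>k. 2 / (real k + 2)) x s \<longrightarrow>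
              (\<forall>K::nat. real K \<ge> C / \<epsilon> powr r \<longrightarrow>
                 \<bar>f (x K) - bilevel_opt Z f g\<bar> \<le> \<epsilon> \<and> g (x K) - lower_min Z g \<le> eps_g)))
    \<and>
    (\<exists>C>0. \<forall>\<^sub>F \<epsilon> in at_right 0.
         let M = (SUP x\<in>lower_argmin Z g. dual_norm N (gf x));
             D = ndiam N Z;
             eps_g = min (\<alpha> / r * (\<epsilon> / (2 * M)) powr r) (\<alpha> / r * (\<epsilon> / (2 * Lf)) powr (r / 2));
             \<gamma> = min (\<epsilon> / (Lf * D\<^sup>2)) (eps_g / (Lg * D\<^sup>2))
         in \<forall>x s. cgbio_run Z g gg gf eps_g (\<lambda>k. \<gamma>) x s \<longrightarrow>
              (\<forall>K::nat. real K \<ge> C / \<epsilon> powr (r + 1) \<longrightarrow>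
                 (\<exists>k<K. \<bar>fw_gap Z g gf (x k)\<bar> \<le> \<epsilon> \<and> g (x k) - lower_min Z g \<le> eps_g)))"
  proof (cases "Z = {}")
  case True
  then have nr: "\<And>e \<gamma> x s. \<not> cgbio_run Z g gg gf e \<gamma> x s" by (simp add: cgbio_run_def)
  show ?thesis using nr by (auto simp: Let_def intro: exI[of _ 1])
next
  case False
  interpret bil N Z U f g gf gg Lf Lg \<alpha> r
    using norm Z_convex Z_compact U_open Z_sub_U g_convex g_grad g_Lip f_grad f_C1 f_Lip Lf_pos Lg_pos
      alpha_pos r_ge1 holder_EB False by unfold_locales auto
  have Meq: "(SUP x\<in>lower_argmin Z g. dual_norm N (gf x)) = M" by (simp add: M_def Xs_def)
  have Mp: "M > 0" using M_pos Meq by simp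
  have P2: "\<exists>C>0. \<forall>\<^sub>F \<epsilon> in at_right 0.
     \<forall>x s. cgbio_run Z g gg gf (min (\<alpha> / r * (\<epsilon> / (2 * M)) powr r) (\<alpha> / r * (\<epsilon> / (2 * Lf)) powr (r / 2)))
             (\<lambda>k. min (\<epsilon> / (Lf * D\<^sup>2)) ((min (\<alpha> / r * (\<epsilon> / (2 * M)) powr r) (\<alpha> / r * (\<epsilon> / (2 * Lf)) powr (r / 2))) / (Lg * D\<^sup>2))) x s \<longrightarrow>
       (\<forall>K::nat. real K \<ge> C / \<epsilon> powr (r + 1) \<longrightarrow>
          (\<exists>k<K. \<bar>fw_gap Z g gf (x k)\<bar> \<le> \<epsilon> \<and> g (x k) - gs \<le> min (\<alpha> / r * (\<epsilon> / (2 * M)) powr r) (\<alpha> / r * (\<epsilon> / (2 * Lf)) powr (r / 2))))"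
  proof (cases "D = 0")
    case True then show ?thesis by (rule part2_D0)
  next
    case False then have "D > 0" using D_prop(2) by simp
    then show ?thesis using part2_Dpos Mp by blast
  qed
  show ?thesis
    unfolding Let_def Meq gs_def[symmetric] fs_def[symmetric] D_def[symmetric]
    using part1[OF _ Mp] P2 by blast
qed

end
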